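(* Let $n\ge1$ and for $k\in\mathbb{N}$ set $D(k)=\sum_{\alpha+\beta=k}(-1)^\beta\dim\mathcal{H}^{\alpha,\beta}(\mathbb{C}^n)$. Then for every $l\in\mathbb{N}$, $$D(2l)=\dim\mathcal{H}^l(\mathbb{R}^{n+1})=\frac{(n-1)_l\,(\frac{n+1}{2})_l}{l!\,(\frac{n-1}{2})_l}.$$
   Context: $\mathcal{H}^{\alpha,\beta}(\mathbb{C}^n)$: polynomials in $Z,\bar Z$ on $\mathbb{C}^n$, homogeneous of degree $\alpha$ in $Z$ and $\beta$ in $\bar Z$, annihilated by $\sum_j\partial^2/\partial z_j\partial\bar z_j$. $\mathcal{H}^l(\mathbb{R}^N)$: harmonic homogeneous polynomials of degree $l$ on $\mathbb{R}^N$. $(a)_l=\Gamma(a+l)/\Gamma(a)$; the right-hand expression is understood as a meromorphic function of $n$ (so for $n=1$ it is interpreted by continuity in $n$). *)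

theory Defs
  imports "HOL-Analysis.Analysis" "HOL-Library.Function_Algebras"
begin

text \<open>Multi-indices are functions nat => nat; a multi-index lives in n variables
if it vanishes outside {..<n}. A polynomial is represented by its coefficient
function (monomial exponent |-> coefficient).\<close>

definition mindex_in :: "nat \<Rightarrow> (nat \<Rightarrow> nat) \<Rightarrow> bool" where
  "mindex_in n a \<longleftrightarrow> (\<forall>i\<ge>n. a i = 0)"

definition mdeg :: "nat \<Rightarrow> (nat \<Rightarrow> nat) \<Rightarrow> nat" where
  "mdeg n a = (\<Sum>i<n. a i)"

definition rderiv :: "nat \<Rightarrow> ((nat \<Rightarrow> nat) \<Rightarrow> real) \<Rightarrow> ((nat \<Rightarrow> nat) \<Rightarrow> real)" where
  "rderiv i p = (\<lambda>m. real (m i + 1) * p (m(i := m i + 1)))"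

definition rLaplacian :: "nat \<Rightarrow> ((nat \<Rightarrow> nat) \<Rightarrow> real) \<Rightarrow> ((nat \<Rightarrow> nat) \<Rightarrow> real)" where
  "rLaplacian N p = (\<lambda>m. \<Sum>j<N. rderiv j (rderiv j p) m)"

definition harmR :: "nat \<Rightarrow> nat \<Rightarrow> ((nat \<Rightarrow> nat) \<Rightarrow> real) set" where
  "harmR N l = {p. (\<forall>m. p m \<noteq> 0 \<longrightarrow> mindex_in N m \<and> mdeg N m = l)
                   \<and> rLaplacian N p = 0}"

text \<open>Polynomials in Z, Zbar on C^n with complex coefficients: coefficient functions
on pairs (a, b) of multi-indices, the monomial being Z^a Zbar^b.
Formal derivatives d/dz_j and d/dzbar_j.\<close>

type_synonym cpoly = "(nat \<Rightarrow> nat) \<times> (nat \<Rightarrow> nat) \<Rightarrow> complex"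

definition dz :: "nat \<Rightarrow> cpoly \<Rightarrow> cpoly" where
  "dz j p = (\<lambda>(a, b). of_nat (a j + 1) * p (a(j := a j + 1), b))"

definition dzbar :: "nat \<Rightarrow> cpoly \<Rightarrow> cpoly" where
  "dzbar j p = (\<lambda>(a, b). of_nat (b j + 1) * p (a, b(j := b j + 1)))"

definition cLaplacian :: "nat \<Rightarrow> cpoly \<Rightarrow> cpoly" where
  "cLaplacian n p = (\<lambda>m. \<Sum>j<n. dz j (dzbar j p) m)"

definition harmC :: "nat \<Rightarrow> nat \<Rightarrow> nat \<Rightarrow> cpoly set" where
  "harmC n \<alpha> \<beta> = {p. (\<forall>a b. p (a, b) \<noteq> 0 \<longrightarrow>
        mindex_in n a \<and> mindex_in n b \<and> mdeg n a = \<alpha> \<and> mdeg n b = \<beta>)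
     \<and> cLaplacian n p = 0}"

definition dimR :: "((nat \<Rightarrow> nat) \<Rightarrow> real) set \<Rightarrow> nat" where
  "dimR S = vector_space.dim (\<lambda>(r::real) f. (\<lambda>x. r * f x)) S"

definition dimC :: "cpoly set \<Rightarrow> nat" where
  "dimC S = vector_space.dim (\<lambda>(r::complex) f. (\<lambda>x. r * f x)) S"

definition Dsum :: "nat \<Rightarrow> nat \<Rightarrow> int" where
  "Dsum n k = (\<Sum>\<beta>\<le>k. (-1) ^ \<beta> * int (dimC (harmC n (k - \<beta>) \<beta>)))"

definition closed_form :: "nat \<Rightarrow> real \<Rightarrow> real" where
  "closed_form l x = pochhammer (x - 1) l * pochhammer ((x + 1) / 2) l
                      / (fact l * pochhammer ((x - 1) / 2) l)"

end

theory Submission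
  imports Defs "HOL-Computational_Algebra.Formal_Power_Series"
begin

lemma sum_apply: "(sum f A) x = (\<Sum>a\<in>A. f a x)"
  by (induction A rule: infinite_finite_induct) auto

lemma vs_fun: "vector_space (\<lambda>(r::'a::field) (f::'x\<Rightarrow>'a). (\<lambda>x. r * f x))"
  by unfold_locales (auto simp: fun_eq_iff algebra_simps)

lemma dim_by_basis:
  fixes V :: "('x \<Rightarrow> 'a::field) set" and M :: "'x set" and b :: "'x \<Rightarrow> 'x \<Rightarrow> 'a"
  assumes fin: "finite M"
  and bV: "\<And>m. m \<in> M \<Longrightarrow> b m \<in> V"
  and bd: "\<And>m m'. m\<in>M \<Longrightarrow> m'\<in>M \<Longrightarrow> b m m' = (if m' = m then 1 else 0)"
  and z: "0 \<in> V" and ad: "\<And>p q. p \<in> V \<Longrightarrow> q \<in> V \<Longrightarrow> p + q \<in> V"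
  and sc: "\<And>c p. p \<in> V \<Longrightarrow> (\<lambda>x. c * p x) \<in> V"
  and uniq: "\<And>p. p \<in> V \<Longrightarrow> (\<forall>m\<in>M. p m = 0) \<Longrightarrow> p = 0"
  shows "vector_space.dim (\<lambda>(r::'a) f. (\<lambda>x. r * f x)) V = card M"
proof -
  interpret v: vector_space "\<lambda>(r::'a) (f::'x\<Rightarrow>'a). (\<lambda>x. r * f x)" by (rule vs_fun)
  have sub: "v.subspace V" unfolding v.subspace_def using z ad sc by auto
  have inj: "inj_on b M"
  proof (rule inj_onI)
    fix x y assume "x \<in> M" "y \<in> M" "b x = b y"
    then have "b x x = b y x" by simp
    with bd[OF \<open>x\<in>M\<close> \<open>x\<in>M\<close>] bd[OF \<open>y\<in>M\<close> \<open>x\<in>M\<close>] show "x = y" by (auto split: if_splits)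
  qed
  have ind: "v.independent (b ` M)"
  proof (rule v.independent_if_scalars_zero)
    show "finite (b ` M)" using fin by simp
    fix f :: "('x\<Rightarrow>'a) \<Rightarrow> 'a" and x
    assume s: "(\<Sum>x\<in>b ` M. (\<lambda>y. f x * x y)) = 0" and x: "x \<in> b ` M"
    then obtain m where m: "m \<in> M" "x = b m" by auto
    have "(\<Sum>x\<in>b ` M. (\<lambda>y. f x * x y)) m = 0" using s by simp
    then have "(\<Sum>x\<in>b ` M. f x * x m) = 0" by (simp add: sum_apply)
    then have "(\<Sum>m'\<in>M. f (b m') * b m' m) = 0" by (simp add: sum.reindex[OF inj])
    moreover have "(\<Sum>m'\<in>M. f (b m') * b m' m) = f (b m)"
    proof -
      have "(\<Sum>m'\<in>M. f (b m') * b m' m) = (\<Sum>m'\<in>M. if m' = m then f (b m) else 0)"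
        by (rule sum.cong) (auto simp: bd m)
      also have "\<dots> = f (b m)" using fin m by (simp add: sum.delta')
      finally show ?thesis .
    qed
    ultimately show "f x = 0" using m by simp
  qed
  have span: "V \<subseteq> v.span (b ` M)"
  proof
    fix p assume p: "p \<in> V"
    define s where "s = (\<Sum>m\<in>M. (\<lambda>y. p m * b m y))"
    have sV: "s \<in> V" unfolding s_def
      by (rule v.subspace_sum[OF sub]) (auto intro: sc bV)
    have sv: "s m' = p m'" if "m' \<in> M" for m'
    proof -
      have "s m' = (\<Sum>m\<in>M. p m * b m m')" by (simp add: s_def sum_apply)
      also have "\<dots> = (\<Sum>m\<in>M. if m = m' then p m' else 0)"
        by (rule sum.cong) (auto simp: bd that)
      also have "\<dots> = p m'" using fin that by (simp add: sum.delta)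
      finally show ?thesis .
    qed
    have "p + (\<lambda>x. (-1) * s x) \<in> V" using p sV by (intro ad sc)
    moreover have "\<forall>m\<in>M. (p + (\<lambda>x. (-1) * s x)) m = 0" using sv by simp
    ultimately have "p + (\<lambda>x. (-1) * s x) = 0" by (rule uniq)
    then have "p = s" by (auto simp: fun_eq_iff)
    moreover have "s \<in> v.span (b ` M)" unfolding s_def
      by (intro v.span_sum v.span_scale v.span_base) auto
    ultimately show "p \<in> v.span (b ` M)" by simp
  qed
  have "card (b ` M) = card M" using inj by (rule card_image)
  then show ?thesis using v.dim_unique[of "b ` M" V "card M"] ind span bV by auto
qed

definition Mon :: "nat \<Rightarrow> nat \<Rightarrow> (nat \<Rightarrow> nat) set" where
  "Mon N l = {m. mindex_in N m \<and> mdeg N m = l}"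

lemma mindex_upd: "j < N \<Longrightarrow> mindex_in N (m(j:=v)) \<longleftrightarrow> mindex_in N m"
  by (auto simp: mindex_in_def)

lemma mdeg_upd: "j < N \<Longrightarrow> mdeg N (m(j:=v)) + m j = mdeg N m + v"
proof -
  assume j: "j < N"
  have "mdeg N (m(j:=v)) = v + (\<Sum>i\<in>{..<N}-{j}. m i)"
    unfolding mdeg_def using j by (subst sum.remove[of _ j]) auto
  moreover have "mdeg N m = m j + (\<Sum>i\<in>{..<N}-{j}. m i)"
    unfolding mdeg_def using j by (subst sum.remove[of _ j]) auto
  ultimately show ?thesis by simp
qed

lemma rderiv2: "rderiv j (rderiv j p) m = real ((m j + 1) * (m j + 2)) * p (m(j := m j + 2))"
  by (simp add: rderiv_def algebra_simps)

lemma dz_dzbar: "dz j (dzbar j p) (a, b) = of_nat ((a j + 1) * (b j + 1)) * p (a(j := a j + 1), b(j := b j + 1))"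
  by (simp add: dz_def dzbar_def algebra_simps)

function extR :: "nat \<Rightarrow> nat \<Rightarrow> ((nat\<Rightarrow>nat)\<Rightarrow>real) \<Rightarrow> (nat\<Rightarrow>nat) \<Rightarrow> real" where
 "extR n l q m = (if m \<notin> Mon (Suc n) l then 0
    else if m n \<le> 1 then q m
    else - (\<Sum>j<n. real ((m j + 1)*(m j + 2)) * extR n l q ((m(n := m n - 2))(j := m j + 2)))
          / real ((m n - 1) * m n))"
  by pat_completeness auto
termination by (relation "Wellfounded.measure (\<lambda>(n,l,q,m). m n)") auto

declare extR.simps[simp del]

lemma extR_supp: "extR n l q m \<noteq> 0 \<Longrightarrow> m \<in> Mon (Suc n) l"
  by (subst (asm) extR.simps) (auto split: if_splits)

lemma extR_free: "m \<in> Mon (Suc n) l \<Longrightarrow> m n \<le> 1 \<Longrightarrow> extR n l q m = q m"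
  by (subst extR.simps) auto

lemma extR_harm: "rLaplacian (Suc n) (extR n l q) = 0"
proof
  fix m
  let ?p = "extR n l q"
  have L: "rLaplacian (Suc n) ?p m = (\<Sum>j<n. real ((m j + 1) * (m j + 2)) * ?p (m(j := m j + 2)))
     + real ((m n + 1) * (m n + 2)) * ?p (m(n := m n + 2))"
    by (simp add: rLaplacian_def rderiv2)
  show "rLaplacian (Suc n) ?p m = 0 m"
  proof (cases "m(n := m n + 2) \<in> Mon (Suc n) l")
    case True
    have eq: "(m(n := m n + 2))(n := m n + 2 - 2) = m" by (simp add: fun_eq_iff)
    have e: "?p (m(n := m n + 2)) = - (\<Sum>j<n. real ((m j + 1)*(m j + 2)) * ?p (m(j := m j + 2)))
          / real ((m n + 1) * (m n + 2))"
    proof -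
      have "?p (m(n := m n + 2)) = - (\<Sum>j<n. real (((m(n := m n + 2)) j + 1)*((m(n := m n + 2)) j + 2)) * ?p (((m(n := m n + 2))(n := m n + 2 - 2))(j := (m(n := m n + 2)) j + 2)))
          / real (((m(n := m n + 2)) n - 1) * (m(n := m n + 2)) n)"
        using True by (subst extR.simps) simp
      also have "\<dots> = - (\<Sum>j<n. real ((m j + 1)*(m j + 2)) * ?p (m(j := m j + 2)))
          / real ((m n + 1) * (m n + 2))"
        unfolding eq by (intro arg_cong2[where f="(/)"] arg_cong[where f=uminus] sum.cong) auto
      finally show ?thesis .
    qed
    have nz: "real ((m n + 1) * (m n + 2)) \<noteq> 0" by (simp del: of_nat_mult)
    show ?thesis unfolding L e using nz by (simp del: of_nat_mult)
  next
    case False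
    have "?p (m(j := m j + 2)) = 0" if "j < Suc n" for j
    proof -
      have d1: "mdeg (Suc n) (m(j := m j + 2)) = mdeg (Suc n) m + 2"
        using mdeg_upd[OF that, of m "m j+2"] by simp
      have d2: "mdeg (Suc n) (m(n := m n + 2)) = mdeg (Suc n) m + 2"
        using mdeg_upd[of n "Suc n" m "m n+2"] by simp
      have "m(j := m j + 2) \<notin> Mon (Suc n) l"
        using False mindex_upd[OF that] mindex_upd[of n "Suc n"] d1 d2 by (auto simp: Mon_def)
      then show ?thesis using extR_supp by blast
    qed
    then show ?thesis unfolding L by simp
  qed
qed

lemma harmR_uniq:
  assumes p: "p \<in> harmR (Suc n) l" and z: "\<forall>m\<in>Mon (Suc n) l. m n \<le> 1 \<longrightarrow> p m = 0"
  shows "p = 0"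
proof -
  have supp: "p m = 0" if "m \<notin> Mon (Suc n) l" for m
    using p that by (auto simp: harmR_def Mon_def)
  have lap: "rLaplacian (Suc n) p m = 0" for m using p by (simp add: harmR_def)
  have "\<forall>m. m n = k \<longrightarrow> p m = 0" for k
  proof (induction k rule: less_induct)
    case (less k)
    show ?case
    proof (intro allI impI)
      fix m assume mk: "m n = k"
      show "p m = 0"
      proof (cases "m \<in> Mon (Suc n) l \<and> k \<ge> 2")
        case False
        show ?thesis
        proof (cases "m \<in> Mon (Suc n) l")
          case False then show ?thesis by (rule supp)
        next
          case True
          with \<open>\<not> (m \<in> Mon (Suc n) l \<and> k \<ge> 2)\<close> have "m n \<le> 1" using mk by simp
          then show ?thesis using z True by blast
        qed
      next
        case True
        define m' where "m' = m(n := k - 2)"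
        have "rLaplacian (Suc n) p m' = (\<Sum>j<n. real ((m' j + 1) * (m' j + 2)) * p (m'(j := m' j + 2)))
           + real ((m' n + 1) * (m' n + 2)) * p (m'(n := m' n + 2))"
          by (simp add: rLaplacian_def rderiv2)
        moreover have "p (m'(j := m' j + 2)) = 0" if "j < n" for j
        proof -
          have "k - 2 < k" using True by simp
          moreover have "(m'(j := m' j + 2)) n = k - 2" using that by (simp add: m'_def)
          ultimately show ?thesis using less[of "k-2"] by blast
        qed
        moreover have "m'(n := m' n + 2) = m" using True mk by (auto simp: m'_def fun_eq_iff)
        ultimately have "real ((m' n + 1) * (m' n + 2)) * p m = 0" using lap[of m'] by simp
        then show ?thesis by (simp del: of_nat_mult)
      qed
    qed
  qed
  then show ?thesis by (auto simp: fun_eq_iff)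
qed

fun cnt :: "nat \<Rightarrow> nat \<Rightarrow> nat" where
  "cnt 0 k = (if k = 0 then 1 else 0)"
| "cnt (Suc m) k = (\<Sum>j\<le>k. cnt m j)"

lemma sum_rev_atMost: "(\<Sum>v\<le>k. f (k - v)) = (\<Sum>j\<le>(k::nat). f j)"
  by (rule sum.reindex_bij_witness[where i="\<lambda>i. k-i" and j="\<lambda>i. k-i"]) auto

lemma mdeg_Suc: "mdeg (Suc n) m = mdeg n m + m n"
  by (simp add: mdeg_def)

lemma mdeg_upd_out: "mdeg n (m(n := v)) = mdeg n m"
  unfolding mdeg_def by (rule sum.cong) auto

lemma slice_eq:
  assumes "v \<le> l"
  shows "{m\<in>Mon (Suc n) l. m n = v} = (\<lambda>a. a(n:=v)) ` Mon n (l-v)"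
proof (intro equalityI subsetI)
  fix m assume m: "m \<in> {m\<in>Mon (Suc n) l. m n = v}"
  then have h: "mindex_in (Suc n) m" "mdeg (Suc n) m = l" "m n = v" by (auto simp: Mon_def)
  have mem: "m(n:=0) \<in> Mon n (l-v)"
    unfolding Mon_def using h by (auto simp: mindex_in_def mdeg_Suc mdeg_upd_out)
  have eq: "m = (m(n:=0))(n:=v)" using m by auto
  show "m \<in> (\<lambda>a. a(n:=v)) ` Mon n (l-v)" by (rule image_eqI[where f="\<lambda>a. a(n:=v)", OF eq mem])
next
  fix m assume "m \<in> (\<lambda>a. a(n:=v)) ` Mon n (l-v)"
  then obtain a where a: "a \<in> Mon n (l-v)" "m = a(n:=v)" by auto
  then have h: "mindex_in n a" "mdeg n a = l - v" by (auto simp: Mon_def)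
  have "mindex_in (Suc n) m" using h a(2) by (auto simp: mindex_in_def)
  moreover have "mdeg (Suc n) m = l" using h a(2) assms by (simp add: mdeg_Suc mdeg_upd_out)
  ultimately show "m \<in> {m\<in>Mon (Suc n) l. m n = v}" using a(2) by (simp add: Mon_def)
qed

lemma slice_inj: "inj_on (\<lambda>a. a(n:=v)) (Mon n k)"
proof (rule inj_onI)
  fix a b assume a: "a \<in> Mon n k" and b: "b \<in> Mon n k" and e: "a(n:=v) = b(n:=v)"
  have "a x = b x" for x
  proof (cases "x = n")
    case True
    then show ?thesis using a b by (simp add: Mon_def mindex_in_def)
  next
    case False
    then show ?thesis using fun_cong[OF e, of x] by simp
  qed
  then show "a = b" by (simp add: fun_eq_iff)
qed

lemma slice_card:
  assumes "v \<le> l" "finite (Mon n (l-v))"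
  shows "finite {m\<in>Mon (Suc n) l. m n = v}" "card {m\<in>Mon (Suc n) l. m n = v} = card (Mon n (l-v))"
  using assms(2) by (simp_all add: slice_eq[OF assms(1)] card_image[OF slice_inj])

lemma Mon_split: "Mon (Suc n) l = (\<Union>v\<in>{..l}. {m\<in>Mon (Suc n) l. m n = v})"
proof (intro equalityI subsetI)
  fix m assume m: "m \<in> Mon (Suc n) l"
  then have "m n \<le> l" by (simp add: Mon_def mdeg_Suc)
  then show "m \<in> (\<Union>v\<in>{..l}. {m\<in>Mon (Suc n) l. m n = v})" using m by blast
qed blast

lemma Mon_0: "Mon 0 l = (if l = 0 then {\<lambda>_. 0} else {})"
proof -
  have "Mon 0 l = {m. (\<forall>i. m i = 0) \<and> 0 = l}" by (simp add: Mon_def mindex_in_def mdeg_def)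
  also have "\<dots> = (if l = 0 then {\<lambda>_. 0} else {})" by (auto simp: fun_eq_iff)
  finally show ?thesis .
qed

lemma Mon_card: "finite (Mon n k) \<and> card (Mon n k) = cnt n k"
proof (induction n arbitrary: k)
  case 0
  then show ?case by (simp add: Mon_0)
next
  case (Suc n)
  have fin: "finite {m\<in>Mon (Suc n) k. m n = v}" if "v \<in> {..k}" for v
    using slice_card(1)[of v k n] Suc that by auto
  have "card (Mon (Suc n) k) = (\<Sum>v\<in>{..k}. card {m\<in>Mon (Suc n) k. m n = v})"
    by (subst Mon_split, rule card_UN_disjoint) (use fin in auto)
  also have "\<dots> = (\<Sum>v\<in>{..k}. cnt n (k - v))"
    by (rule sum.cong) (use slice_card(2) Suc in auto)
  also have "\<dots> = cnt (Suc n) k"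
    by (simp add: sum_rev_atMost)
  finally show ?case using fin by (subst Mon_split) auto
qed

lemma rLap_add: "rLaplacian N (p + q) = rLaplacian N p + rLaplacian N q"
  by (simp add: rLaplacian_def rderiv2 fun_eq_iff sum.distrib algebra_simps)

lemma rLap_scale: "rLaplacian N (\<lambda>x. c * p x) = (\<lambda>x. c * rLaplacian N p x)"
  by (simp add: rLaplacian_def rderiv2 fun_eq_iff sum_distrib_left algebra_simps)

lemma rLap_zero: "rLaplacian N 0 = 0"
  by (simp add: rLaplacian_def rderiv2 fun_eq_iff)

lemma card_free_R: "card {m\<in>Mon (Suc n) l. m n \<le> 1} = cnt n l + (if l \<ge> 1 then cnt n (l-1) else 0)"
proof -
  have fin: "finite (Mon n k)" for k using Mon_card by blast
  have split: "{m\<in>Mon (Suc n) l. m n \<le> 1} = {m\<in>Mon (Suc n) l. m n = 0} \<union> {m\<in>Mon (Suc n) l. m n = 1}"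
    by auto
  have c0: "finite {m\<in>Mon (Suc n) l. m n = 0}" "card {m\<in>Mon (Suc n) l. m n = 0} = cnt n l"
    using slice_card[of 0 l n] fin Mon_card by auto
  show ?thesis
  proof (cases "l \<ge> 1")
    case True
    have c1: "finite {m\<in>Mon (Suc n) l. m n = 1}" "card {m\<in>Mon (Suc n) l. m n = 1} = cnt n (l-1)"
      using slice_card[of 1 l n] fin Mon_card True by auto
    show ?thesis unfolding split
      by (subst card_Un_disjoint) (use c0 c1 True in auto)
  next
    case False
    have e: "{m\<in>Mon (Suc n) l. m n = 1} = {}" using False by (auto simp: Mon_def mdeg_Suc)
    show ?thesis using c0 False unfolding split e by simp
  qed
qed

lemma dimR_harm: "dimR (harmR (Suc n) l) = cnt n l + (if l \<ge> 1 then cnt n (l-1) else 0)"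
proof -
  define M where "M = {m\<in>Mon (Suc n) l. m n \<le> 1}"
  define b where "b = (\<lambda>m0. extR n l (\<lambda>m. if m = m0 then 1 else 0))"
  have "dimR (harmR (Suc n) l) = card M"
    unfolding dimR_def
  proof (rule dim_by_basis)
    show "finite M" unfolding M_def using Mon_card[of "Suc n" l] by simp
    show "b m \<in> harmR (Suc n) l" if "m \<in> M" for m
      unfolding harmR_def b_def using extR_supp extR_harm by (fastforce simp: Mon_def)
    show "b m m' = (if m' = m then 1 else 0)" if "m \<in> M" "m' \<in> M" for m m'
      using that unfolding b_def M_def by (simp add: extR_free)
    show "0 \<in> harmR (Suc n) l" by (simp add: harmR_def rLap_zero)
    show "p + q \<in> harmR (Suc n) l" if "p \<in> harmR (Suc n) l" "q \<in> harmR (Suc n) l" for p q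
      using that unfolding harmR_def by (auto simp: rLap_add) (metis add.left_neutral add.right_neutral)+
    show "(\<lambda>x. c * p x) \<in> harmR (Suc n) l" if "p \<in> harmR (Suc n) l" for c p
      using that by (auto simp: harmR_def rLap_scale)
    show "p = 0" if "p \<in> harmR (Suc n) l" "\<forall>m\<in>M. p m = 0" for p
      using harmR_uniq[OF that(1)] that(2) unfolding M_def by blast
  qed
  then show ?thesis unfolding M_def card_free_R .
qed

function extC :: "nat \<Rightarrow> nat \<Rightarrow> nat \<Rightarrow> cpoly \<Rightarrow> (nat\<Rightarrow>nat) \<Rightarrow> (nat\<Rightarrow>nat) \<Rightarrow> complex" where
 "extC n \<alpha> \<beta> q a b = (if (a,b) \<notin> Mon (Suc n) \<alpha> \<times> Mon (Suc n) \<beta> then 0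
   else if a n = 0 \<or> b n = 0 then q (a,b)
   else - (\<Sum>j<n. of_nat ((a j + 1)*(b j + 1)) * extC n \<alpha> \<beta> q ((a(n := a n - 1))(j := a j + 1)) ((b(n := b n - 1))(j := b j + 1)))
      / of_nat (a n * b n))"
  by pat_completeness auto
termination by (relation "Wellfounded.measure (\<lambda>(n,\<alpha>,\<beta>,q,a,b). a n)") auto

declare extC.simps[simp del]

lemma extC_supp: "extC n \<alpha> \<beta> q a b \<noteq> 0 \<Longrightarrow> a \<in> Mon (Suc n) \<alpha> \<and> b \<in> Mon (Suc n) \<beta>"
  by (subst (asm) extC.simps) (auto split: if_splits)

lemma extC_free: "a \<in> Mon (Suc n) \<alpha> \<Longrightarrow> b \<in> Mon (Suc n) \<beta> \<Longrightarrow> a n = 0 \<or> b n = 0 \<Longrightarrow> extC n \<alpha> \<beta> q a b = q (a,b)"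
  by (subst extC.simps) auto

lemma cLap_expand: "cLaplacian (Suc n) p (a,b) = (\<Sum>j<n. of_nat ((a j + 1) * (b j + 1)) * p (a(j := a j + 1), b(j := b j + 1)))
     + of_nat ((a n + 1) * (b n + 1)) * p (a(n := a n + 1), b(n := b n + 1))"
  by (simp add: cLaplacian_def dz_dzbar)

lemma extC_harm: "cLaplacian (Suc n) (\<lambda>(a,b). extC n \<alpha> \<beta> q a b) = 0"
proof
  fix m :: "(nat\<Rightarrow>nat)\<times>(nat\<Rightarrow>nat)"
  obtain a b where m: "m = (a,b)" by (cases m)
  let ?p = "extC n \<alpha> \<beta> q"
  have L: "cLaplacian (Suc n) (\<lambda>(a,b). ?p a b) m = (\<Sum>j<n. of_nat ((a j + 1) * (b j + 1)) * ?p (a(j := a j + 1)) (b(j := b j + 1)))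
     + of_nat ((a n + 1) * (b n + 1)) * ?p (a(n := a n + 1)) (b(n := b n + 1))"
    unfolding m cLap_expand by simp
  show "cLaplacian (Suc n) (\<lambda>(a,b). ?p a b) m = 0 m"
  proof (cases "a(n := a n + 1) \<in> Mon (Suc n) \<alpha> \<and> b(n := b n + 1) \<in> Mon (Suc n) \<beta>")
    case True
    have eqa: "(a(n := a n + 1))(n := a n + 1 - 1) = a" by (simp add: fun_eq_iff)
    have eqb: "(b(n := b n + 1))(n := b n + 1 - 1) = b" by (simp add: fun_eq_iff)
    have e: "?p (a(n := a n + 1)) (b(n := b n + 1)) = - (\<Sum>j<n. of_nat ((a j + 1) * (b j + 1)) * ?p (a(j := a j + 1)) (b(j := b j + 1)))
          / of_nat ((a n + 1) * (b n + 1))"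
    proof -
      have "?p (a(n := a n + 1)) (b(n := b n + 1)) = - (\<Sum>j<n. of_nat (((a(n := a n + 1)) j + 1)*((b(n := b n + 1)) j + 1))
         * ?p (((a(n := a n + 1))(n := a n + 1 - 1))(j := (a(n := a n + 1)) j + 1)) (((b(n := b n + 1))(n := b n + 1 - 1))(j := (b(n := b n + 1)) j + 1)))
          / of_nat (((a(n := a n + 1)) n) * ((b(n := b n + 1)) n))"
        using True by (subst extC.simps) simp
      also have "\<dots> = - (\<Sum>j<n. of_nat ((a j + 1) * (b j + 1)) * ?p (a(j := a j + 1)) (b(j := b j + 1)))
          / of_nat ((a n + 1) * (b n + 1))"
        unfolding eqa eqb by (intro arg_cong2[where f="(/)"] arg_cong[where f=uminus] sum.cong) auto
      finally show ?thesis .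
    qed
    have "(a n + 1) * (b n + 1) \<noteq> 0" by simp
    then have nz: "(of_nat ((a n + 1) * (b n + 1)) :: complex) \<noteq> 0" by (metis of_nat_eq_0_iff)
    define c where "c = (of_nat ((a n + 1) * (b n + 1)) :: complex)"
    have nz': "c \<noteq> 0" unfolding c_def by (rule nz)
    show ?thesis unfolding L e c_def[symmetric] using nz' by simp
  next
    case False
    have "?p (a(j := a j + 1)) (b(j := b j + 1)) = 0" if "j < Suc n" for j
    proof -
      have d1: "mdeg (Suc n) (a(j := a j + 1)) = mdeg (Suc n) a + 1"
        using mdeg_upd[OF that, of a "a j+1"] by simp
      have d2: "mdeg (Suc n) (a(n := a n + 1)) = mdeg (Suc n) a + 1"
        using mdeg_upd[of n "Suc n" a "a n+1"] by simp
      have d3: "mdeg (Suc n) (b(j := b j + 1)) = mdeg (Suc n) b + 1"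
        using mdeg_upd[OF that, of b "b j+1"] by simp
      have d4: "mdeg (Suc n) (b(n := b n + 1)) = mdeg (Suc n) b + 1"
        using mdeg_upd[of n "Suc n" b "b n+1"] by simp
      have "\<not> (a(j := a j + 1) \<in> Mon (Suc n) \<alpha> \<and> b(j := b j + 1) \<in> Mon (Suc n) \<beta>)"
        using False mindex_upd[OF that] mindex_upd[of n "Suc n"] d1 d2 d3 d4 by (auto simp: Mon_def)
      then show ?thesis using extC_supp by blast
    qed
    then show ?thesis unfolding L by simp
  qed
qed

lemma harmC_uniq:
  assumes p: "p \<in> harmC (Suc n) \<alpha> \<beta>"
    and z: "\<forall>a\<in>Mon (Suc n) \<alpha>. \<forall>b\<in>Mon (Suc n) \<beta>. a n = 0 \<or> b n = 0 \<longrightarrow> p (a,b) = 0"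
  shows "p = 0"
proof -
  have supp: "p (a,b) = 0" if "\<not> (a \<in> Mon (Suc n) \<alpha> \<and> b \<in> Mon (Suc n) \<beta>)" for a b
    using p that by (auto simp: harmC_def Mon_def)
  have lap: "cLaplacian (Suc n) p m = 0" for m using p by (simp add: harmC_def)
  have "\<forall>a b. a n = k \<longrightarrow> p (a,b) = 0" for k
  proof (induction k rule: less_induct)
    case (less k)
    show ?case
    proof (intro allI impI)
      fix a b assume ak: "a n = k"
      show "p (a,b) = 0"
      proof (cases "a \<in> Mon (Suc n) \<alpha> \<and> b \<in> Mon (Suc n) \<beta> \<and> k \<ge> 1 \<and> b n \<ge> 1")
        case False
        show ?thesis
        proof (cases "a \<in> Mon (Suc n) \<alpha> \<and> b \<in> Mon (Suc n) \<beta>")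
          case False then show ?thesis by (rule supp)
        next
          case True
          with \<open>\<not> (a \<in> Mon (Suc n) \<alpha> \<and> b \<in> Mon (Suc n) \<beta> \<and> k \<ge> 1 \<and> b n \<ge> 1)\<close>
          have "a n = 0 \<or> b n = 0" using ak by auto
          then show ?thesis using z True by blast
        qed
      next
        case True
        define a' where "a' = a(n := k - 1)"
        define b' where "b' = b(n := b n - 1)"
        have E: "cLaplacian (Suc n) p (a',b') = (\<Sum>j<n. of_nat ((a' j + 1) * (b' j + 1)) * p (a'(j := a' j + 1), b'(j := b' j + 1)))
           + of_nat ((a' n + 1) * (b' n + 1)) * p (a'(n := a' n + 1), b'(n := b' n + 1))"
          by (rule cLap_expand)
        have Z: "p (a'(j := a' j + 1), b'(j := b' j + 1)) = 0" if "j < n" for j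
        proof -
          have "k - 1 < k" using True by simp
          moreover have "(a'(j := a' j + 1)) n = k - 1" using that by (simp add: a'_def)
          ultimately show ?thesis using less[of "k-1"] by blast
        qed
        have "a'(n := a' n + 1) = a" using True ak by (auto simp: a'_def fun_eq_iff)
        moreover have "b'(n := b' n + 1) = b" using True by (auto simp: b'_def fun_eq_iff)
        ultimately have "of_nat ((a' n + 1) * (b' n + 1)) * p (a,b) = 0" using lap[of "(a',b')"] E Z by simp
        moreover have "(a' n + 1) * (b' n + 1) \<noteq> 0" by simp
        then have "(of_nat ((a' n + 1) * (b' n + 1)) :: complex) \<noteq> 0" by (metis of_nat_eq_0_iff)
        ultimately show ?thesis by (metis mult_eq_0_iff)
      qed
    qed
  qed
  then show ?thesis by (auto simp: fun_eq_iff)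
qed

lemma cLap_add: "cLaplacian N (p + q) = cLaplacian N p + cLaplacian N q"
  by (simp add: cLaplacian_def dz_def dzbar_def fun_eq_iff sum.distrib algebra_simps split: prod.splits)

lemma cLap_scale: "cLaplacian N (\<lambda>x. c * p x) = (\<lambda>x. c * cLaplacian N p x)"
  by (simp add: cLaplacian_def dz_def dzbar_def fun_eq_iff sum_distrib_left algebra_simps split: prod.splits)

lemma cLap_zero: "cLaplacian N 0 = 0"
  by (simp add: cLaplacian_def dz_def dzbar_def fun_eq_iff split: prod.splits)

definition FreeC :: "nat \<Rightarrow> nat \<Rightarrow> nat \<Rightarrow> ((nat\<Rightarrow>nat)\<times>(nat\<Rightarrow>nat)) set" where
  "FreeC n \<alpha> \<beta> = {(a,b). a \<in> Mon (Suc n) \<alpha> \<and> b \<in> Mon (Suc n) \<beta> \<and> (a n = 0 \<or> b n = 0)}"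

lemma dimC_free: "dimC (harmC (Suc n) \<alpha> \<beta>) = card (FreeC n \<alpha> \<beta>)"
  unfolding dimC_def
proof (rule dim_by_basis)
  define bb where "bb = (\<lambda>m0. (\<lambda>(a,b). extC n \<alpha> \<beta> (\<lambda>m. if m = m0 then 1 else 0) a b))"
  show "finite (FreeC n \<alpha> \<beta>)"
  proof (rule finite_subset)
    show "FreeC n \<alpha> \<beta> \<subseteq> Mon (Suc n) \<alpha> \<times> Mon (Suc n) \<beta>" by (auto simp: FreeC_def)
    show "finite (Mon (Suc n) \<alpha> \<times> Mon (Suc n) \<beta>)" using Mon_card by blast
  qed
  show "bb m \<in> harmC (Suc n) \<alpha> \<beta>" if "m \<in> FreeC n \<alpha> \<beta>" for m
    unfolding harmC_def bb_def using extC_supp extC_harm by (fastforce simp: Mon_def)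
  show "bb m m' = (if m' = m then 1 else 0)" if "m \<in> FreeC n \<alpha> \<beta>" "m' \<in> FreeC n \<alpha> \<beta>" for m m'
    using that unfolding bb_def FreeC_def by (auto simp: extC_free split: if_splits)
  show "0 \<in> harmC (Suc n) \<alpha> \<beta>" by (simp add: harmC_def cLap_zero)
  show "p + q \<in> harmC (Suc n) \<alpha> \<beta>" if "p \<in> harmC (Suc n) \<alpha> \<beta>" "q \<in> harmC (Suc n) \<alpha> \<beta>" for p q
    using that unfolding harmC_def by (auto simp: cLap_add) (metis add.left_neutral add.right_neutral)+
  show "(\<lambda>x. c * p x) \<in> harmC (Suc n) \<alpha> \<beta>" if "p \<in> harmC (Suc n) \<alpha> \<beta>" for c p
    using that by (auto simp: harmC_def cLap_scale)
  show "p = 0" if "p \<in> harmC (Suc n) \<alpha> \<beta>" "\<forall>m\<in>FreeC n \<alpha> \<beta>. p m = 0" for p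
    using harmC_uniq[OF that(1)] that(2) unfolding FreeC_def by blast
qed

lemma card_FreeC: "card (FreeC n \<alpha> \<beta>) = cnt n \<alpha> * cnt (Suc n) \<beta> + (cnt (Suc n) \<alpha> - cnt n \<alpha>) * cnt n \<beta>"
proof -
  define A0 where "A0 = {a\<in>Mon (Suc n) \<alpha>. a n = 0}"
  define B0 where "B0 = {b\<in>Mon (Suc n) \<beta>. b n = 0}"
  have fin: "finite (Mon k j)" for k j using Mon_card by blast
  have A0: "finite A0" "card A0 = cnt n \<alpha>" unfolding A0_def using slice_card[of 0 \<alpha> n] fin Mon_card by auto
  have B0: "finite B0" "card B0 = cnt n \<beta>" unfolding B0_def using slice_card[of 0 \<beta> n] fin Mon_card by auto
  have sub: "A0 \<subseteq> Mon (Suc n) \<alpha>" by (auto simp: A0_def)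
  have eq: "FreeC n \<alpha> \<beta> = (A0 \<times> Mon (Suc n) \<beta>) \<union> ((Mon (Suc n) \<alpha> - A0) \<times> B0)"
    by (auto simp: FreeC_def A0_def B0_def)
  have "card (FreeC n \<alpha> \<beta>) = card (A0 \<times> Mon (Suc n) \<beta>) + card ((Mon (Suc n) \<alpha> - A0) \<times> B0)"
    unfolding eq by (rule card_Un_disjoint) (use A0 B0 fin in auto)
  also have "\<dots> = cnt n \<alpha> * cnt (Suc n) \<beta> + (cnt (Suc n) \<alpha> - cnt n \<alpha>) * cnt n \<beta>"
    using A0 B0 Mon_card sub by (simp add: card_cartesian_product card_Diff_subset)
  finally show ?thesis .
qed

definition FF :: "nat \<Rightarrow> int fps" where "FF m = Abs_fps (\<lambda>k. int (cnt m k))"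
definition GG :: "nat \<Rightarrow> int fps" where "GG m = Abs_fps (\<lambda>k. (-1)^k * int (cnt m k))"
definition HH :: "nat \<Rightarrow> int fps" where "HH m = Abs_fps (\<lambda>k. if even k then int (cnt m (k div 2)) else 0)"

lemma cnt_Suc_diff: "int (cnt (Suc m) (Suc k)) - int (cnt (Suc m) k) = int (cnt m (Suc k))"
  by simp

lemma cnt_mono: "cnt m k \<le> cnt (Suc m) k"
  by (cases k) auto

lemma FF_step: "FF (Suc m) * (1 - fps_X) = FF m"
proof (rule fps_ext)
  fix k
  have "FF (Suc m) * (1 - fps_X) = FF (Suc m) - fps_X * FF (Suc m)" by (simp add: algebra_simps)
  then show "fps_nth (FF (Suc m) * (1 - fps_X)) k = fps_nth (FF m) k"
    by (cases k) (auto simp: FF_def)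
qed

lemma GG_step: "GG (Suc m) * (1 + fps_X) = GG m"
proof (rule fps_ext)
  fix k
  have "GG (Suc m) * (1 + fps_X) = GG (Suc m) + fps_X * GG (Suc m)" by (simp add: algebra_simps)
  then show "fps_nth (GG (Suc m) * (1 + fps_X)) k = fps_nth (GG m) k"
    by (cases k) (auto simp: GG_def algebra_simps)
qed

lemma HH_step: "HH (Suc m) * (1 - fps_X^2) = HH m"
proof (rule fps_ext)
  fix k
  have e: "HH (Suc m) * (1 - fps_X^2) = HH (Suc m) - fps_X^2 * HH (Suc m)" by (simp add: algebra_simps)
  show "fps_nth (HH (Suc m) * (1 - fps_X^2)) k = fps_nth (HH m) k"
  proof (cases "k < 2")
    case True
    then have "k = 0 \<or> k = 1" by auto
    then show ?thesis unfolding e by (auto simp: HH_def fps_X_power_mult_nth)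
  next
    case False
    then obtain j where k: "k = Suc (Suc j)" by (metis add_2_eq_Suc le_add_diff_inverse not_less)
    show ?thesis unfolding e k
      by (auto simp: HH_def fps_X_power_mult_nth)
  qed
qed

lemma FF_pow: "FF m * (1 - fps_X)^m = 1"
proof (induction m)
  case 0
  show ?case by (rule fps_ext) (simp add: FF_def)
next
  case (Suc m)
  have "FF (Suc m) * (1 - fps_X)^Suc m = (FF (Suc m) * (1 - fps_X)) * (1 - fps_X)^m" by (simp add: mult_ac)
  then show ?case using Suc by (simp add: FF_step)
qed

lemma GG_pow: "GG m * (1 + fps_X)^m = 1"
proof (induction m)
  case 0
  show ?case by (rule fps_ext) (simp add: GG_def)
next
  case (Suc m)
  have "GG (Suc m) * (1 + fps_X)^Suc m = (GG (Suc m) * (1 + fps_X)) * (1 + fps_X)^m" by (simp add: mult_ac)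
  then show ?case using Suc by (simp add: GG_step)
qed

lemma HH_pow: "HH m * (1 - fps_X^2)^m = 1"
proof (induction m)
  case 0
  show ?case by (rule fps_ext) (auto simp: HH_def)
next
  case (Suc m)
  have "HH (Suc m) * (1 - fps_X^2)^Suc m = (HH (Suc m) * (1 - fps_X^2)) * (1 - fps_X^2)^m" by (simp add: mult_ac)
  then show ?case using Suc by (simp add: HH_step)
qed

lemma series_eq:
  "GG (Suc m) * FF m + GG m * FF (Suc m) - GG m * FF m = HH (Suc m) * (1 + fps_X^2)"
proof -
  define a :: "int fps" where "a = 1 - fps_X"
  define b :: "int fps" where "b = 1 + fps_X"
  define Q where "Q = a^Suc m * b^Suc m"
  have F1: "FF m * a^m = 1" and F2: "FF (Suc m) * a^Suc m = 1"
    and G1: "GG m * b^m = 1" and G2: "GG (Suc m) * b^Suc m = 1"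
    unfolding a_def b_def by (rule FF_pow GG_pow)+
  have e1: "GG (Suc m) * FF m * Q = (GG (Suc m) * b^Suc m) * (FF m * a^m) * a"
    unfolding Q_def by (simp only: power_Suc mult_ac)
  have e2: "GG m * FF (Suc m) * Q = (GG m * b^m) * (FF (Suc m) * a^Suc m) * b"
    unfolding Q_def by (simp only: power_Suc mult_ac)
  have e3: "GG m * FF m * Q = (GG m * b^m) * (FF m * a^m) * (a * b)"
    unfolding Q_def by (simp only: power_Suc mult_ac)
  have ab: "a * b = 1 - fps_X^2" unfolding a_def b_def by (simp add: algebra_simps power2_eq_square)
  have QQ: "Q = (1 - fps_X^2)^Suc m" unfolding Q_def ab[symmetric] by (simp add: power_mult_distrib)
  have L: "(GG (Suc m) * FF m + GG m * FF (Suc m) - GG m * FF m) * Q = a + b - a * b"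
  proof -
    have "(GG (Suc m) * FF m + GG m * FF (Suc m) - GG m * FF m) * Q
       = GG (Suc m) * FF m * Q + GG m * FF (Suc m) * Q - GG m * FF m * Q" by (simp add: algebra_simps)
    also have "\<dots> = a + b - a * b" unfolding e1 e2 e3 F1 F2 G1 G2 by simp
    finally show ?thesis .
  qed
  have R: "(HH (Suc m) * (1 + fps_X^2)) * Q = 1 + fps_X^2"
    unfolding QQ using HH_pow[of "Suc m"] by (simp add: mult_ac)
  have "a + b - a * b = 1 + fps_X^2" unfolding ab by (simp add: a_def b_def)
  have Qnz: "Q \<noteq> 0"
  proof
    assume "Q = 0"
    then have "fps_nth Q 0 = 0" by simp
    moreover have "fps_nth ((1 - fps_X^2 :: int fps)^Suc m) 0 = 1" by (simp add: fps_nth_power_0)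
    ultimately show False using QQ by simp
  qed
  show ?thesis
    using L R \<open>a + b - a * b = 1 + fps_X^2\<close> Qnz by (metis mult_right_cancel)
qed

lemma dimC_int: "int (dimC (harmC (Suc m) \<alpha> \<beta>)) =
   int (cnt m \<alpha>) * int (cnt (Suc m) \<beta>) + int (cnt (Suc m) \<alpha>) * int (cnt m \<beta>) - int (cnt m \<alpha>) * int (cnt m \<beta>)"
proof -
  have e: "int (cnt (Suc m) \<alpha> - cnt m \<alpha>) = int (cnt (Suc m) \<alpha>) - int (cnt m \<alpha>)"
    using cnt_mono[of m \<alpha>] by (rule of_nat_diff)
  show ?thesis by (simp only: dimC_free card_FreeC of_nat_add of_nat_mult e) (simp add: algebra_simps)
qed

lemma GF_nth: "fps_nth (GG a * FF b) k = (\<Sum>\<beta>\<le>k. (-1)^\<beta> * int (cnt a \<beta>) * int (cnt b (k-\<beta>)))"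
  by (simp add: fps_mult_nth GG_def FF_def atMost_atLeast0 del: cnt.simps(2))

lemma Dsum_eq: "Dsum (Suc m) (2*l) = int (cnt (Suc m) l) + (if l \<ge> 1 then int (cnt (Suc m) (l-1)) else 0)"
proof -
  define k where "k = 2*l"
  let ?c = "\<lambda>i. int (cnt m i)" and ?C = "\<lambda>i. int (cnt (Suc m) i)"
  have "Dsum (Suc m) k = (\<Sum>\<beta>\<le>k. (-1)^\<beta> * (?c (k-\<beta>) * ?C \<beta> + ?C (k-\<beta>) * ?c \<beta> - ?c (k-\<beta>) * ?c \<beta>))"
    unfolding Dsum_def by (rule sum.cong) (simp_all add: dimC_int)
  also have "\<dots> = (\<Sum>\<beta>\<le>k. (-1)^\<beta> * ?C \<beta> * ?c (k-\<beta>) + (-1)^\<beta> * ?c \<beta> * ?C (k-\<beta>) - (-1)^\<beta> * ?c \<beta> * ?c (k-\<beta>))"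
    by (rule sum.cong) (simp_all add: algebra_simps del: cnt.simps(2))
  also have "\<dots> = fps_nth (GG (Suc m) * FF m + GG m * FF (Suc m) - GG m * FF m) k"
    by (simp only: fps_add_nth fps_sub_nth GF_nth sum.distrib sum_subtractf)
  also have "\<dots> = fps_nth (HH (Suc m) * (1 + fps_X^2)) k" by (simp only: series_eq)
  also have "\<dots> = fps_nth (HH (Suc m) + fps_X^2 * HH (Suc m)) k" by (simp add: algebra_simps)
  also have "\<dots> = ?C l + (if l \<ge> 1 then ?C (l-1) else 0)"
  proof (cases "l \<ge> 1")
    case True
    have "k - 2 = 2 * (l - 1)" using True by (simp add: k_def)
    then show ?thesis using True by (simp add: HH_def fps_X_power_mult_nth k_def del: cnt.simps(2))
  next
    case False
    then have "l = 0" by simp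
    then show ?thesis by (simp add: HH_def fps_X_power_mult_nth k_def del: cnt.simps(2))
  qed
  finally show ?thesis unfolding k_def .
qed

lemma alg1: "(F::real) > 0 \<Longrightarrow> c > 0 \<Longrightarrow> P/F + x*P/(c*F) = P*(x+c)/(c*F)"
  by (simp add: field_simps)

lemma alg2: "(F::real) > 0 \<Longrightarrow> c > 0 \<Longrightarrow> P*(y+c-1)/(c*F) + P/F = P*(y - 1 + 2*c)/(c*F)"
  by (simp add: field_simps)

lemma alg3: "(a::real) \<noteq> 0 \<Longrightarrow> (F::real) > 0 \<Longrightarrow> c > 0 \<Longrightarrow>
   (2*a)*P/(c*F) * ((a + c)/a) = P*(2*a + 2*c)/(c*F)"
  by (simp add: field_simps)

lemma poch_sum: "(\<Sum>j\<le>k. pochhammer (x::real) j / fact j) = pochhammer (x + 1) k / fact k"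
proof (induction k)
  case 0 then show ?case by simp
next
  case (Suc k)
  have a: "pochhammer (x+1) (Suc k) = pochhammer (x+1) k * (x + 1 + real k)" by (simp add: pochhammer_Suc)
  have b: "pochhammer x (Suc k) = x * pochhammer (x+1) k" by (simp add: pochhammer_rec)
  have f: "fact (Suc k) = (real k + 1) * fact k" by simp
  have "(\<Sum>j\<le>Suc k. pochhammer x j / fact j) = pochhammer (x + 1) k / fact k + x * pochhammer (x+1) k / ((real k + 1) * fact k)"
    using Suc by (simp only: sum.atMost_Suc b f)
  also have "\<dots> = pochhammer (x + 1) k * (x + (real k + 1)) / ((real k + 1) * fact k)"
    by (rule alg1) auto
  also have "\<dots> = pochhammer (x + 1) (Suc k) / fact (Suc k)" unfolding a f by simp
  finally show ?case .
qed

lemma cnt_poch: "n \<ge> 1 \<Longrightarrow> real (cnt n k) = pochhammer (real n) k / fact k"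
proof (induction n arbitrary: k rule: nat_induct_at_least)
  case base
  have "cnt 1 k = 1" by (simp add: sum.neutral)
  then show ?case by (simp add: pochhammer_fact[symmetric])
next
  case (Suc n)
  have "real (cnt (Suc n) k) = (\<Sum>j\<le>k. pochhammer (real n) j / fact j)"
    using Suc.IH by simp
  also have "\<dots> = pochhammer (real (Suc n)) k / fact k" by (simp add: poch_sum add.commute)
  finally show ?case .
qed

definition gfun :: "nat \<Rightarrow> real \<Rightarrow> real" where
  "gfun l x = pochhammer x (l-1) * (x - 1 + 2 * real l) / fact l"

lemma dim_g:
  assumes "n \<ge> 1" "l \<ge> 1"
  shows "real (cnt n l) + real (cnt n (l-1)) = gfun l (real n)"
proof -
  obtain j where j: "l = Suc j" using assms(2) by (cases l) auto
  have "real (cnt n l) + real (cnt n (l-1)) = pochhammer (real n) (Suc j) / fact (Suc j) + pochhammer (real n) j / fact j"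
    using cnt_poch[OF assms(1)] j by simp
  also have "\<dots> = pochhammer (real n) j * (real n + (real j + 1) - 1) / ((real j + 1) * fact j) + pochhammer (real n) j / fact j"
    by (simp add: pochhammer_Suc)
  also have "\<dots> = pochhammer (real n) j * (real n - 1 + 2 * (real j + 1)) / ((real j + 1) * fact j)"
    by (rule alg2) auto
  also have "\<dots> = gfun l (real n)"
    unfolding gfun_def j by simp
  finally show ?thesis .
qed

lemma closed_g:
  assumes "l \<ge> 1" "pochhammer ((x - 1) / 2) l \<noteq> 0"
  shows "closed_form l x = gfun l x"
proof -
  obtain j where j: "l = Suc j" using assms(1) by (cases l) auto
  define a where "a = (x - 1) / 2"
  have anz: "a \<noteq> 0" using assms(2) unfolding j a_def[symmetric] by (auto simp: pochhammer_rec)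
  have p1: "pochhammer (x - 1) l = (x - 1) * pochhammer x j"
    unfolding j by (simp add: pochhammer_rec)
  have p2: "a * pochhammer (a + 1) l = pochhammer a l * (a + real l)"
    by (metis pochhammer_rec pochhammer_Suc)
  have xa: "x - 1 = 2 * a" by (simp add: a_def)
  have x1: "(x + 1) / 2 = a + 1" by (simp add: a_def field_simps)
  have pnz: "pochhammer a l \<noteq> 0" using assms(2) by (simp add: a_def)
  have q: "pochhammer (a + 1) l / pochhammer a l = (a + real l) / a"
    using p2 anz pnz by (simp add: field_simps)
  have "closed_form l x = pochhammer (x - 1) l / fact l * (pochhammer (a + 1) l / pochhammer a l)"
    unfolding closed_form_def x1 a_def[symmetric] by simp
  also have "\<dots> = (x - 1) * pochhammer x j / fact l * ((a + real l) / a)" unfolding p1 q ..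
  also have "\<dots> = (2 * a) * pochhammer x j / ((real j + 1) * fact j) * ((a + (real j + 1)) / a)"
    unfolding j xa by (simp add: ac_simps)
  also have "\<dots> = pochhammer x j * (2 * a + 2 * (real j + 1)) / ((real j + 1) * fact j)"
    by (rule alg3) (use anz in auto)
  also have "\<dots> = pochhammer x j * (x - 1 + 2 * (real j + 1)) / ((real j + 1) * fact j)"
    unfolding xa ..
  also have "\<dots> = gfun l x"
    unfolding gfun_def j by simp
  finally show ?thesis .
qed

lemma poch_nz: "x > 1/2 \<Longrightarrow> x \<noteq> 1 \<Longrightarrow> pochhammer ((x - 1) / 2) l \<noteq> (0::real)"
proof
  assume x: "x > 1/2" "x \<noteq> 1" and "pochhammer ((x - 1) / 2) l = 0"
  then obtain k where "k < l" "(x - 1) / 2 = - real k" by (auto simp: pochhammer_eq_0_iff)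
  then have "x = 1 - 2 * real k" by simp
  with x show False by (cases k) auto
qed

theorem proposition3p2:
  fixes n l :: nat
  assumes "n \<ge> 1"
  shows "Dsum n (2 * l) = int (dimR (harmR (n + 1) l))
     \<and> (closed_form l \<longlongrightarrow> real (dimR (harmR (n + 1) l))) (at (real n))
     \<and> (n \<ge> 2 \<longrightarrow> real (dimR (harmR (n + 1) l)) = closed_form l (real n))"
proof -
  obtain m where m: "n = Suc m" using assms by (cases n) auto
  have dR: "dimR (harmR (n + 1) l) = cnt n l + (if l \<ge> 1 then cnt n (l-1) else 0)"
    using dimR_harm[of n l] by simp
  have P1: "Dsum n (2 * l) = int (dimR (harmR (n + 1) l))"
    unfolding dR by (simp add: m Dsum_eq del: cnt.simps(2))
  have P23: "(closed_form l \<longlongrightarrow> real (dimR (harmR (n + 1) l))) (at (real n))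
     \<and> (n \<ge> 2 \<longrightarrow> real (dimR (harmR (n + 1) l)) = closed_form l (real n))"
  proof (cases "l = 0")
    case True
    have c: "closed_form l = (\<lambda>_. 1)" using True by (simp add: closed_form_def fun_eq_iff)
    have "real (dimR (harmR (n + 1) l)) = 1" using True dR cnt_poch[OF assms, of 0] by simp
    then show ?thesis unfolding c by simp
  next
    case False
    then have l1: "l \<ge> 1" by simp
    have dv: "real (dimR (harmR (n + 1) l)) = gfun l (real n)"
      using dR dim_g[OF assms l1] l1 by simp
    have cont: "isCont (gfun l) (real n)" unfolding gfun_def by (intro continuous_intros) simp
    have ev: "\<forall>\<^sub>F x in at (real n). gfun l x = closed_form l x"
      unfolding eventually_at
    proof (intro exI[of _ "1/2"] conjI allI impI ballI)
      fix x :: real assume x: "x \<noteq> real n \<and> dist x (real n) < 1/2"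
      have rn: "real n \<ge> 1" using assms by simp
      have d: "\<bar>x - real n\<bar> < 1/2" using x by (simp add: dist_real_def)
      have "x > 1/2" using d rn abs_less_iff[of "x - real n" "1/2"] by linarith
      moreover have "x \<noteq> 1"
      proof
        assume "x = 1"
        show False
        proof (cases "n = 1")
          case True then show False using x \<open>x = 1\<close> by simp
        next
          case False then have "real n \<ge> 2" using assms by simp
          then show False using d \<open>x = 1\<close> abs_less_iff[of "x - real n" "1/2"] by linarith
        qed
      qed
      ultimately show "gfun l x = closed_form l x" using closed_g[OF l1 poch_nz] by simp
    qed simp
    have lim: "(closed_form l \<longlongrightarrow> gfun l (real n)) (at (real n))"
      using Lim_transform_eventually[OF cont[unfolded isCont_def] ev] .
    have eq2: "n \<ge> 2 \<longrightarrow> gfun l (real n) = closed_form l (real n)"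
      using closed_g[OF l1 poch_nz[of "real n" l]] by auto
    show ?thesis using lim eq2 dv by simp
  qed
  show ?thesis using P1 P23 by blast
qed

end
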